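(* Let ${\boldsymbol\pi}$ be a permuton and let $\{\sigma_n\}_{n\in\mathbb N}$ be a sequence of permutations with $|\sigma_n|\to\infty$ whose associated permutons ${\boldsymbol\pi}_{\sigma_n}$ converge weakly to ${\boldsymbol\pi}$. Assume that ${\boldsymbol\pi}(A)=0$ for every monotone set $A\subset[0,1]^2$. Then $\operatorname{LIS}(\sigma_n)/|\sigma_n|\to0$.
   Context: A permuton is a Borel probability measure on $[0,1]^2$ with both marginals equal to Lebesgue measure on $[0,1]$. For a permutation $\sigma$ of size $n$, ${\boldsymbol\pi}_\sigma$ is $n$ times Lebesgue measure on $\bigcup_{j=1}^n[\frac{j-1}{n},\frac jn]\times[\frac{\sigma(j)-1}{n},\frac{\sigma(j)}{n}]$. A set $A\subset[0,1]^2$ is monotone if $A\subset([0,t]\times[0,s])\cup([t,1]\times[s,1])$ for every $(t,s)\in A$. $\operatorname{LIS}(\sigma)$ is the maximal cardinality of a set of indices on which $\sigma$ is increasing. *)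

theory Defs
  imports "HOL-Probability.Probability" "HOL-Combinatorics.Permutations"
begin

definition unit_lebesgue :: "real measure" where
  "unit_lebesgue = density lborel (indicator {0..1})"

text \<open>A permuton: a Borel probability measure on the plane (hence concentrated on
  [0,1]^2, by the marginal conditions) whose two marginals are Lebesgue measure on [0,1].\<close>
definition permuton :: "(real \<times> real) measure \<Rightarrow> bool" where
  "permuton \<mu> \<longleftrightarrow> prob_space \<mu> \<and> sets \<mu> = sets borel \<and>
     distr \<mu> lborel fst = unit_lebesgue \<and> distr \<mu> lborel snd = unit_lebesgue"

definition perm_squares :: "nat \<Rightarrow> (nat \<Rightarrow> nat) \<Rightarrow> (real \<times> real) set" where
  "perm_squares n \<sigma> = (\<Union>j\<in>{1..n}.
      {(real j - 1) / real n .. real j / real n} \<times>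
      {(real (\<sigma> j) - 1) / real n .. real (\<sigma> j) / real n})"

definition permuton_of :: "nat \<Rightarrow> (nat \<Rightarrow> nat) \<Rightarrow> (real \<times> real) measure" where
  "permuton_of n \<sigma> = density lborel (\<lambda>p. ennreal (real n) * indicator (perm_squares n \<sigma>) p)"

definition weak_conv_plane ::
    "(nat \<Rightarrow> (real \<times> real) measure) \<Rightarrow> (real \<times> real) measure \<Rightarrow> bool" where
  "weak_conv_plane M \<mu> \<longleftrightarrow>
     (\<forall>f :: real \<times> real \<Rightarrow> real. continuous_on UNIV f \<and> bounded (range f) \<longrightarrow>
        (\<lambda>k. integral\<^sup>L (M k) f) \<longlonglongrightarrow> integral\<^sup>L \<mu> f)"

definition monotone_set :: "(real \<times> real) set \<Rightarrow> bool" where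
  "monotone_set A \<longleftrightarrow> A \<subseteq> {0..1} \<times> {0..1} \<and>
     (\<forall>(t, s) \<in> A. A \<subseteq> ({0..t} \<times> {0..s}) \<union> ({t..1} \<times> {s..1}))"

definition LIS :: "nat \<Rightarrow> (nat \<Rightarrow> nat) \<Rightarrow> nat" where
  "LIS n \<sigma> = Max {card I | I. I \<subseteq> {1..n} \<and> strict_mono_on I \<sigma>}"

end

theory Submission
  imports Defs
begin


definition cmp :: "real \<times> real \<Rightarrow> real \<times> real \<Rightarrow> bool" where
  "cmp p q \<longleftrightarrow> (fst p \<le> fst q \<and> snd p \<le> snd q) \<or> (fst q \<le> fst p \<and> snd q \<le> snd p)"

definition rnd :: "real \<Rightarrow> real \<times> real \<Rightarrow> real \<times> real" where
  "rnd M p = (of_int \<lfloor>M * fst p\<rfloor> / M, of_int \<lfloor>M * snd p\<rfloor> / M)"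

definition grid :: "real \<Rightarrow> (real \<times> real) set" where
  "grid M = rnd M ` ({0..1} \<times> {0..1})"

definition fam :: "nat \<Rightarrow> (real \<times> real) set set" where
  "fam m = {S. S \<subseteq> grid (2^m) \<and> S \<noteq> {} \<and> (\<forall>p\<in>S. \<forall>q\<in>S. cmp p q)}"

definition rad :: "nat \<Rightarrow> real" where "rad m = 4 / 2^m"

definition gfun :: "real \<Rightarrow> (real \<times> real) set \<Rightarrow> real \<times> real \<Rightarrow> real" where
  "gfun a S x = max 0 (min 1 (2 - infdist x S / a))"

definition nbh :: "real \<Rightarrow> (real \<times> real) set \<Rightarrow> (real \<times> real) set" where
  "nbh a S = {x. infdist x S \<le> 2 * a}"

lemma floor_bounds:
  fixes M x :: real assumes "M > 0"
  shows "of_int \<lfloor>M * x\<rfloor> / M \<le> x" "x - 1 / M < of_int \<lfloor>M * x\<rfloor> / M"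
proof -
  have "of_int \<lfloor>M * x\<rfloor> \<le> M * x" by simp
  then show "of_int \<lfloor>M * x\<rfloor> / M \<le> x" using assms by (simp add: divide_le_eq mult.commute)
  have "M * x - 1 < of_int \<lfloor>M * x\<rfloor>" by linarith
  then have "(M * x - 1) / M < of_int \<lfloor>M * x\<rfloor> / M" using assms by (rule divide_strict_right_mono)
  moreover have "(M * x - 1) / M = x - 1 / M" using assms by (simp add: field_simps)
  ultimately show "x - 1 / M < of_int \<lfloor>M * x\<rfloor> / M" by simp
qed

lemma floor_in_range:
  fixes M x :: real assumes "M > 0" "0 \<le> x" "x \<le> 1"
  shows "\<lfloor>M * x\<rfloor> \<in> {0..\<lfloor>M\<rfloor>}"
proof -
  have "0 \<le> M * x" using assms by simp
  moreover have "M * x \<le> M" using assms by (simp add: mult_left_le)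
  ultimately show ?thesis by (auto intro: floor_mono)
qed

lemma grid_sub: assumes "M > 0" shows "grid M \<subseteq> {0..1} \<times> {0..1}"
proof
  fix p assume "p \<in> grid M"
  then obtain q where q: "q \<in> {0..1} \<times> {0..1}" "p = rnd M q" unfolding grid_def by auto
  have a: "0 \<le> of_int \<lfloor>M * z\<rfloor> / M" "of_int \<lfloor>M * z\<rfloor> / M \<le> 1" if "0 \<le> z" "z \<le> 1" for z
  proof -
    show "of_int \<lfloor>M * z\<rfloor> / M \<le> 1" using floor_bounds(1)[OF assms, of z] that by linarith
    show "0 \<le> of_int \<lfloor>M * z\<rfloor> / M" using floor_in_range[OF assms that] assms by auto
  qed
  have "fst q \<in> {0..1}" "snd q \<in> {0..1}" using q(1) by (auto simp: mem_Times_iff)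
  then show "p \<in> {0..1} \<times> {0..1}" using q(2) a[of "fst q"] a[of "snd q"] by (simp add: rnd_def mem_Times_iff)
qed

lemma finite_grid: assumes "M > 0" shows "finite (grid M)"
proof -
  have "grid M \<subseteq> (\<lambda>(i,j). (of_int i / M, of_int j / M)) ` ({0..\<lfloor>M\<rfloor>} \<times> {0..\<lfloor>M\<rfloor>})"
  proof
    fix p assume "p \<in> grid M"
    then obtain q where q: "q \<in> {0..1} \<times> {0..1}" "p = rnd M q" unfolding grid_def by auto
    have "(\<lfloor>M * fst q\<rfloor>, \<lfloor>M * snd q\<rfloor>) \<in> {0..\<lfloor>M\<rfloor>} \<times> {0..\<lfloor>M\<rfloor>}"
      using floor_in_range[OF assms, of "fst q"] floor_in_range[OF assms, of "snd q"] q(1)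
      by (simp add: mem_Times_iff)
    moreover have "p = (\<lambda>(i,j). (of_int i / M, of_int j / M)) (\<lfloor>M * fst q\<rfloor>, \<lfloor>M * snd q\<rfloor>)"
      using q(2) by (simp add: rnd_def)
    ultimately show "p \<in> (\<lambda>(i,j). (of_int i / M, of_int j / M)) ` ({0..\<lfloor>M\<rfloor>} \<times> {0..\<lfloor>M\<rfloor>})"
      by (rule rev_image_eqI)
  qed
  then show ?thesis by (rule finite_subset) auto
qed

lemma finite_fam: "finite (fam m)"
proof -
  have "fam m \<subseteq> Pow (grid (2^m))" unfolding fam_def by auto
  then show ?thesis using finite_grid[of "2^m"] by (simp add: finite_subset)
qed

lemma dist_le_sum: "dist (p::real\<times>real) q \<le> \<bar>fst p - fst q\<bar> + \<bar>snd p - snd q\<bar>"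
proof -
  have "dist p q = sqrt ((fst p - fst q)\<^sup>2 + (snd p - snd q)\<^sup>2)"
    by (cases p; cases q) (simp add: dist_Pair_Pair dist_real_def)
  then show ?thesis using sqrt_sum_squares_le_sum_abs by simp
qed

lemma fst_le_dist: "\<bar>fst p - fst q\<bar> \<le> dist (p::real\<times>real) q"
  using dist_fst_le[of p q] by (simp add: dist_real_def)
lemma snd_le_dist: "\<bar>snd p - snd q\<bar> \<le> dist (p::real\<times>real) q"
  using dist_snd_le[of p q] by (simp add: dist_real_def)

lemma rnd_close: assumes "M > 0" shows "dist p (rnd M p) \<le> 2 / M"
proof -
  have "\<bar>fst p - fst (rnd M p)\<bar> \<le> 1 / M" "\<bar>snd p - snd (rnd M p)\<bar> \<le> 1 / M"
    using floor_bounds[OF assms, of "fst p"] floor_bounds[OF assms, of "snd p"]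
    by (auto simp: rnd_def)
  then show ?thesis using dist_le_sum[of p "rnd M p"] by simp
qed

lemma rnd_mono1: assumes "M > 0" "x \<le> y" shows "of_int \<lfloor>M * x\<rfloor> / M \<le> of_int \<lfloor>M * y\<rfloor> / (M::real)"
proof -
  have "\<lfloor>M * x\<rfloor> \<le> \<lfloor>M * y\<rfloor>" using assms by (intro floor_mono) (simp add: mult_left_mono)
  then show ?thesis using assms by (simp add: divide_right_mono)
qed

lemma cmp_rnd: assumes "M > 0" "cmp p q" shows "cmp (rnd M p) (rnd M q)"
  using assms rnd_mono1[OF assms(1)] unfolding cmp_def rnd_def by auto

lemma closed_nbh: "closed (nbh a S)"
  unfolding nbh_def by (intro closed_Collect_le continuous_intros)

lemma gfun_cont: assumes "a > 0" shows "continuous_on UNIV (gfun a S)"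
  unfolding gfun_def using assms by (intro continuous_intros) auto

lemma gfun_range: "0 \<le> gfun a S x" "gfun a S x \<le> 1"
  unfolding gfun_def by auto

lemma gfun_bounded: "bounded (range (gfun a S))"
  unfolding bounded_iff using gfun_range by (intro exI[of _ 1]) auto

lemma gfun_le: assumes "a > 0" shows "gfun a S x \<le> indicator (nbh a S) x"
proof (cases "x \<in> nbh a S")
  case True then show ?thesis using gfun_range by simp
next
  case False
  then have "infdist x S > 2 * a" unfolding nbh_def by auto
  then have "infdist x S / a > 2" using assms by (simp add: field_simps)
  then show ?thesis using False unfolding gfun_def by simp
qed

lemma gfun_one: assumes "a > 0" "infdist x S \<le> a" shows "gfun a S x = 1"
proof -
  have "infdist x S / a \<le> 1" using assms by (simp add: field_simps)
  then show ?thesis unfolding gfun_def by simp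
qed

lemma ancestor:
  assumes "S' \<in> fam (Suc m)"
  shows "\<exists>S\<in>fam m. nbh (rad (Suc m)) S' \<subseteq> nbh (rad m) S"
proof -
  let ?M = "2^m :: real"
  have M: "?M > 0" by simp
  define S where "S = rnd ?M ` S'"
  have S'g: "S' \<subseteq> {0..1} \<times> {0..1}" using assms grid_sub[of "2^Suc m"] unfolding fam_def by auto
  have "S \<subseteq> grid ?M" unfolding S_def grid_def using S'g by (rule image_mono)
  moreover have "S \<noteq> {}" using assms unfolding S_def fam_def by simp
  moreover have "\<forall>p\<in>S. \<forall>q\<in>S. cmp p q"
  proof (intro ballI)
    fix p q assume "p \<in> S" "q \<in> S"
    then obtain p' q' where "p' \<in> S'" "q' \<in> S'" "p = rnd ?M p'" "q = rnd ?M q'" unfolding S_def by blast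
    moreover have "cmp p' q'" using assms \<open>p' \<in> S'\<close> \<open>q' \<in> S'\<close> unfolding fam_def by blast
    ultimately show "cmp p q" using cmp_rnd[OF M] by simp
  qed
  ultimately have "S \<in> fam m" unfolding fam_def by blast
  moreover have "nbh (rad (Suc m)) S' \<subseteq> nbh (rad m) S"
  proof
    fix x assume x: "x \<in> nbh (rad (Suc m)) S'"
    have "finite S'" "S' \<noteq> {}" using assms finite_grid[of "2^Suc m"] unfolding fam_def
      by (auto intro: finite_subset)
    then have "closed S'" by (simp add: finite_imp_closed)
    obtain s where s: "s \<in> S'" "infdist x S' = dist x s"
      using infdist_attains_inf[OF \<open>closed S'\<close> \<open>S' \<noteq> {}\<close>] by blast
    have "infdist x S \<le> dist x (rnd ?M s)" using s unfolding S_def by (intro infdist_le) auto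
    also have "\<dots> \<le> dist x s + dist s (rnd ?M s)" by (rule dist_triangle)
    also have "\<dots> \<le> 2 * rad (Suc m) + 2 / ?M"
    proof -
      have "dist x s \<le> 2 * rad (Suc m)" using x s unfolding nbh_def by simp
      then show ?thesis using rnd_close[OF M, of s] by linarith
    qed
    also have "\<dots> = 2 * rad m - 2 / ?M" unfolding rad_def by (simp add: field_simps)
    also have "\<dots> \<le> 2 * rad m" by simp
    finally show "x \<in> nbh (rad m) S" unfolding nbh_def by simp
  qed
  ultimately show ?thesis by blast
qed

lemma ancestor_iter:
  assumes "m \<le> j" "W \<in> fam j"
  shows "\<exists>S\<in>fam m. nbh (rad j) W \<subseteq> nbh (rad m) S"
  using assms
proof (induction j arbitrary: W rule: dec_induct)
  case base then show ?case by blast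
next
  case (step j)
  obtain U where U: "U \<in> fam j" "nbh (rad (Suc j)) W \<subseteq> nbh (rad j) U"
    using ancestor[OF step.prems] by blast
  obtain S where "S \<in> fam m" "nbh (rad j) U \<subseteq> nbh (rad m) S" using step.IH[OF U(1)] by blast
  then show ?case using U(2) by blast
qed

lemma almost_cmp:
  assumes "S \<in> fam m" "p \<in> nbh (rad m) S" "q \<in> nbh (rad m) S"
  shows "(fst p \<le> fst q + 4 * rad m \<and> snd p \<le> snd q + 4 * rad m) \<or>
         (fst q \<le> fst p + 4 * rad m \<and> snd q \<le> snd p + 4 * rad m)"
proof -
  have "finite S" "S \<noteq> {}" using assms finite_grid[of "2^m"] unfolding fam_def
    by (auto intro: finite_subset)
  then have "closed S" by (simp add: finite_imp_closed)
  obtain s where s: "s \<in> S" "infdist p S = dist p s"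
    using infdist_attains_inf[OF \<open>closed S\<close> \<open>S \<noteq> {}\<close>] by blast
  obtain t where t: "t \<in> S" "infdist q S = dist q t"
    using infdist_attains_inf[OF \<open>closed S\<close> \<open>S \<noteq> {}\<close>] by blast
  have ds: "dist p s \<le> 2 * rad m" "dist q t \<le> 2 * rad m" using assms s t unfolding nbh_def by auto
  have "cmp s t" using assms s t unfolding fam_def by auto
  have b: "\<bar>fst p - fst s\<bar> \<le> 2 * rad m" "\<bar>snd p - snd s\<bar> \<le> 2 * rad m"
    "\<bar>fst q - fst t\<bar> \<le> 2 * rad m" "\<bar>snd q - snd t\<bar> \<le> 2 * rad m"
    using ds fst_le_dist[of p s] snd_le_dist[of p s] fst_le_dist[of q t] snd_le_dist[of q t] by linarith+
  from \<open>cmp s t\<close> have "(fst s \<le> fst t \<and> snd s \<le> snd t) \<or> (fst t \<le> fst s \<and> snd t \<le> snd s)"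
    unfolding cmp_def by simp
  then show ?thesis
  proof
    assume "fst s \<le> fst t \<and> snd s \<le> snd t"
    then have "fst p \<le> fst q + 4 * rad m \<and> snd p \<le> snd q + 4 * rad m" using b by linarith
    then show ?thesis by blast
  next
    assume "fst t \<le> fst s \<and> snd t \<le> snd s"
    then have "fst q \<le> fst p + 4 * rad m \<and> snd q \<le> snd p + 4 * rad m" using b by linarith
    then show ?thesis by blast
  qed
qed



lemma perm_squares_compact: "compact (perm_squares n \<sigma>)"
  unfolding perm_squares_def by (intro compact_UN compact_Times compact_Icc) auto

lemma permuton_of_alt: "permuton_of n \<sigma> = density lborel (\<lambda>p. ennreal (real n * indicator (perm_squares n \<sigma>) p))"
  unfolding permuton_of_def by (simp add: ennreal_mult ennreal_indicator)

lemma measure_open_square: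
  fixes a b c d :: real assumes "a \<le> b" "c \<le> d"
  shows "measure lborel ({a<..<b} \<times> {c<..<d}) = (b - a) * (d - c)"
proof -
  have "emeasure (lborel \<Otimes>\<^sub>M lborel) ({a<..<b} \<times> {c<..<d}) = emeasure lborel {a<..<b} * emeasure lborel {c<..<d}"
    by (rule lborel.emeasure_pair_measure_Times) auto
  also have "\<dots> = ennreal ((b - a) * (d - c))" using assms by (simp add: ennreal_mult)
  finally have "emeasure lborel ({a<..<b} \<times> {c<..<d}) = ennreal ((b - a) * (d - c))"
    by (simp add: lborel_prod)
  then show ?thesis using assms by (simp add: measure_def)
qed

lemma step1:
  fixes n :: nat and \<sigma> :: "nat \<Rightarrow> nat" and I :: "nat set" and M :: real
  assumes perm: "\<sigma> permutes {1..n}" and I: "I \<subseteq> {1..n}" and M: "M > 0" "M \<le> real n"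
  defines "S \<equiv> rnd M ` ((\<lambda>j. (real j / real n, real (\<sigma> j) / real n)) ` I)"
  shows "real (card I) / real n \<le> integral\<^sup>L (permuton_of n \<sigma>) (gfun (4 / M) S)"
proof -
  define Q where "Q = perm_squares n \<sigma>"
  define g where "g = gfun (4 / M) S"
  define Sq where "Sq j = {(real j - 1) / real n <..< real j / real n} \<times> {(real (\<sigma> j) - 1) / real n <..< real (\<sigma> j) / real n}" for j
  have npos: "real n > 0" using M by linarith
  have finI: "finite I" using I finite_subset by blast
  have gcont: "continuous_on UNIV g" unfolding g_def using M by (intro gfun_cont) simp
  have gmeas[measurable]: "g \<in> borel_measurable borel" using gcont by (rule borel_measurable_continuous_onI)
  have Qc: "compact Q" unfolding Q_def by (rule perm_squares_compact)
  have Qm[measurable]: "Q \<in> sets borel" using Qc by (simp add: compact_imp_closed)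
  have Qf: "emeasure lborel Q < \<infinity>" using Qc by (rule emeasure_compact_finite)
  have Om[measurable]: "Sq j \<in> sets borel" for j unfolding Sq_def by (intro borel_open open_Times) auto
  have Omeas: "measure lborel (Sq j) = 1 / real n * (1 / real n)" for j
    unfolding Sq_def using npos by (subst measure_open_square) (auto simp: field_simps)
  have Of: "emeasure lborel (Sq j) < \<infinity>" for j
  proof -
    have "Sq j \<subseteq> cbox ((real j - 1) / real n, (real (\<sigma> j) - 1) / real n) (real j / real n, real (\<sigma> j) / real n)"
      unfolding Sq_def cbox_Pair_eq by auto
    then have "emeasure lborel (Sq j) \<le> emeasure lborel (cbox ((real j - 1) / real n, (real (\<sigma> j) - 1) / real n) (real j / real n, real (\<sigma> j) / real n))"
      by (intro emeasure_mono) auto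
    also have "\<dots> < \<infinity>" by (rule emeasure_compact_finite) simp
    finally show ?thesis .
  qed
  have intO: "integrable lborel (indicator (Sq j) :: _ \<Rightarrow> real)" for j
    using Of by (simp add: integrable_indicator_iff)
  have intQ: "integrable lborel (indicator Q :: _ \<Rightarrow> real)"
    using Qf by (simp add: integrable_indicator_iff)
  have "integral\<^sup>L (permuton_of n \<sigma>) g = integral\<^sup>L lborel (\<lambda>x. (real n * indicator Q x) *\<^sub>R g x)"
    unfolding permuton_of_alt Q_def[symmetric] by (rule integral_density) auto
  also have "\<dots> \<ge> integral\<^sup>L lborel (\<lambda>x. \<Sum>j\<in>I. real n * indicator (Sq j) x)"
  proof (rule integral_mono)
    show "integrable lborel (\<lambda>x. \<Sum>j\<in>I. real n * indicator (Sq j) x)"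
      by (rule Bochner_Integration.integrable_sum, rule integrable_mult_right, rule intO)
    show "integrable lborel (\<lambda>x. (real n * indicator Q x) *\<^sub>R g x)"
    proof (rule Bochner_Integration.integrable_bound)
      show "integrable lborel (\<lambda>x. real n * indicator Q x)" using intQ by (rule integrable_mult_right)
      show "(\<lambda>x. (real n * indicator Q x) *\<^sub>R g x) \<in> borel_measurable lborel" by measurable
      show "AE x in lborel. norm ((real n * indicator Q x) *\<^sub>R g x) \<le> norm (real n * indicator Q x)"
      proof (rule AE_I2)
        fix x
        have "0 \<le> g x" "g x \<le> 1" using gfun_range[of "4/M" S x] unfolding g_def by auto
        then show "norm ((real n * indicator Q x) *\<^sub>R g x) \<le> norm (real n * indicator Q x)"
          by (simp add: indicator_def abs_mult mult_left_le)
      qed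
    qed
    fix x :: "real \<times> real"
    show "(\<Sum>j\<in>I. real n * indicator (Sq j) x) \<le> (real n * indicator Q x) *\<^sub>R g x"
    proof (cases "\<exists>j\<in>I. x \<in> Sq j")
      case False
      then have "(\<Sum>j\<in>I. real n * indicator (Sq j) x) = 0" by (intro sum.neutral) auto
      then show ?thesis using gfun_range[of "4/M" S x] unfolding g_def by (simp add: indicator_def)
    next
      case True
      then obtain j where j: "j \<in> I" "x \<in> Sq j" by blast
      have uniq: "j' = j" if "x \<in> Sq j'" for j'
      proof -
        have "(real j' - 1) / real n < fst x" "fst x < real j' / real n"
             "(real j - 1) / real n < fst x" "fst x < real j / real n"
          using that j(2) unfolding Sq_def by (auto simp: mem_Times_iff)
        then have "real j' - 1 < real j" "real j - 1 < real j'" using npos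
          by (smt (verit) divide_strict_right_mono)+
        then show ?thesis by linarith
      qed
      have "(\<Sum>j\<in>I. real n * indicator (Sq j) x) = real n * indicator (Sq j) x + (\<Sum>j\<in>I - {j}. real n * indicator (Sq j) x)"
        by (rule sum.remove[OF finI j(1)])
      also have "(\<Sum>j\<in>I - {j}. real n * indicator (Sq j) x) = 0"
        using uniq by (intro sum.neutral) (auto simp: indicator_def)
      finally have sumeq: "(\<Sum>j\<in>I. real n * indicator (Sq j) x) = real n" using j by simp
      have jn: "j \<in> {1..n}" using j I by auto
      have "\<sigma> j \<in> {1..n}" using permutes_in_image[OF perm] jn by blast
      have "x \<in> {(real j - 1) / real n .. real j / real n} \<times> {(real (\<sigma> j) - 1) / real n .. real (\<sigma> j) / real n}"
        using j(2) unfolding Sq_def by (auto simp: mem_Times_iff)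
      then have "x \<in> Q" using jn unfolding Q_def perm_squares_def by blast
      define c where "c = (real j / real n, real (\<sigma> j) / real n)"
      have cS: "rnd M c \<in> S" unfolding S_def c_def using j(1) by auto
      have inv: "1 / real n \<le> 1 / M" using M by (simp add: frac_le)
      have x1: "\<bar>fst x - fst c\<bar> \<le> 1 / real n" "\<bar>snd x - snd c\<bar> \<le> 1 / real n"
        using j(2) unfolding Sq_def c_def by (auto simp: mem_Times_iff diff_divide_distrib)
      have c1: "\<bar>fst c - fst (rnd M c)\<bar> \<le> 1 / M" "\<bar>snd c - snd (rnd M c)\<bar> \<le> 1 / M"
        using floor_bounds[OF M(1), of "fst c"] floor_bounds[OF M(1), of "snd c"]
        by (auto simp: rnd_def)
      have "dist x (rnd M c) \<le> 4 / M"
        using dist_le_sum[of x "rnd M c"] x1 c1 inv by linarith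
      then have "infdist x S \<le> 4 / M" using cS by (intro infdist_le2) auto
      then have "g x = 1" unfolding g_def using M by (intro gfun_one) auto
      then show ?thesis using sumeq \<open>x \<in> Q\<close> by simp
    qed
  qed
  also have "integral\<^sup>L lborel (\<lambda>x. \<Sum>j\<in>I. real n * indicator (Sq j) x) = (\<Sum>j\<in>I. real n * measure lborel (Sq j))"
    using intO by (subst Bochner_Integration.integral_sum) (auto simp: integral_mult_right_zero)
  also have "\<dots> = (\<Sum>j\<in>I. 1 / real n)"
  proof (rule sum.cong[OF refl])
    fix j show "real n * measure lborel (Sq j) = 1 / real n" unfolding Omeas using npos by (simp add: field_simps)
  qed
  also have "\<dots> = real (card I) / real n" by simp
  finally show ?thesis unfolding g_def .
qed



lemma S_fam:
  fixes n :: nat and \<sigma> :: "nat \<Rightarrow> nat" and I :: "nat set"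
  assumes perm: "\<sigma> permutes {1..n}" and I: "I \<subseteq> {1..n}" "I \<noteq> {}" and sm: "strict_mono_on I \<sigma>"
  shows "rnd (2^m) ` ((\<lambda>j. (real j / real n, real (\<sigma> j) / real n)) ` I) \<in> fam m"
proof -
  let ?f = "\<lambda>j. (real j / real n, real (\<sigma> j) / real n)"
  have box: "?f j \<in> {0..1} \<times> {0..1}" if "j \<in> I" for j
  proof -
    have jn: "j \<in> {1..n}" using that I by auto
    have sj: "\<sigma> j \<in> {1..n}" using permutes_in_image[OF perm] jn by blast
    have "real j / real n \<le> 1" "real (\<sigma> j) / real n \<le> 1" using jn sj by auto
    then show ?thesis by (simp add: mem_Times_iff)
  qed
  have "rnd (2^m) ` (?f ` I) \<subseteq> grid (2^m)" unfolding grid_def using box by (intro image_mono) auto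
  moreover have "rnd (2^m) ` (?f ` I) \<noteq> {}" using I by simp
  moreover have "\<forall>p\<in>rnd (2^m) ` (?f ` I). \<forall>q\<in>rnd (2^m) ` (?f ` I). cmp p q"
  proof (intro ballI)
    fix p q assume "p \<in> rnd (2^m) ` (?f ` I)" "q \<in> rnd (2^m) ` (?f ` I)"
    then obtain i j where ij: "i \<in> I" "j \<in> I" "p = rnd (2^m) (?f i)" "q = rnd (2^m) (?f j)" by blast
    have "cmp (?f i) (?f j)"
    proof (cases i j rule: linorder_cases)
      case less
      then have "\<sigma> i < \<sigma> j" using strict_mono_onD[OF sm ij(1,2)] by blast
      then have "real i / real n \<le> real j / real n" "real (\<sigma> i) / real n \<le> real (\<sigma> j) / real n"
        using less by (auto intro: divide_right_mono)
      then show ?thesis unfolding cmp_def by simp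
    next
      case equal then show ?thesis unfolding cmp_def by simp
    next
      case greater
      then have "\<sigma> j < \<sigma> i" using strict_mono_onD[OF sm ij(2,1)] by blast
      then have "real j / real n \<le> real i / real n" "real (\<sigma> j) / real n \<le> real (\<sigma> i) / real n"
        using greater by (auto intro: divide_right_mono)
      then show ?thesis unfolding cmp_def by simp
    qed
    then show "cmp p q" using ij cmp_rnd[of "2^m"] by simp
  qed
  ultimately show ?thesis unfolding fam_def by blast
qed

lemma LIS_attained:
  "\<exists>I. I \<subseteq> {1..n} \<and> strict_mono_on I \<sigma> \<and> card I = LIS n \<sigma>"
proof -
  let ?A = "{card I | I. I \<subseteq> {1..n} \<and> strict_mono_on I \<sigma>}"
  have "?A \<subseteq> {0..n}"
  proof
    fix c assume "c \<in> ?A"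
    then obtain I where "c = card I" "I \<subseteq> {1..n}" by blast
    then have "c \<le> card {1..n}" using card_mono[of "{1..n}" I] by simp
    then show "c \<in> {0..n}" by simp
  qed
  then have "finite ?A" by (rule finite_subset) simp
  moreover have "card {} \<in> ?A" by (intro CollectI exI[of _ "{}"]) (simp add: strict_mono_on_def)
  then have "?A \<noteq> {}" by blast
  ultimately have "Max ?A \<in> ?A" by (rule Max_in)
  then show ?thesis unfolding LIS_def by auto
qed

lemma lim_ge_of_infinite:
  fixes X :: "nat \<Rightarrow> real"
  assumes "X \<longlonglongrightarrow> l" "infinite {k. e \<le> X k}"
  shows "e \<le> l"
proof (rule ccontr)
  assume "\<not> e \<le> l"
  then have "l < e" by simp
  then have "eventually (\<lambda>k. X k < e) sequentially" using assms(1) by (rule order_tendstoD(2)[rotated])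
  then obtain K where K: "\<And>k. k \<ge> K \<Longrightarrow> X k < e" unfolding eventually_sequentially by blast
  obtain k where "k \<ge> K" "k \<in> {k. e \<le> X k}" using assms(2) unfolding infinite_nat_iff_unbounded_le by blast
  then show False using K by force
qed

lemma rad_small: assumes "e > 0" shows "\<exists>m. 4 * rad m < e"
proof -
  obtain m :: nat where m: "16 / e < real m" using reals_Archimedean2 by blast
  have "real m < 2 ^ m" by (rule of_nat_less_two_power)
  then have "16 / e < 2 ^ m" using m by linarith
  then have "16 < e * 2 ^ m" using assms by (simp add: field_simps)
  then have "4 * rad m < e" unfolding rad_def by (simp add: field_simps)
  then show ?thesis by blast
qed

lemma limit_cmp:
  assumes "\<And>m. Ss m \<in> fam m" "\<And>m. p \<in> nbh (rad m) (Ss m)" "\<And>m. q \<in> nbh (rad m) (Ss m)"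
  shows "cmp p q"
proof (rule ccontr)
  assume nc: "\<not> cmp p q"
  define g1 where "g1 = max (fst p - fst q) (snd p - snd q)"
  define g2 where "g2 = max (fst q - fst p) (snd q - snd p)"
  have "g1 > 0" "g2 > 0" using nc unfolding cmp_def g1_def g2_def by auto
  then obtain m where m: "4 * rad m < min g1 g2" using rad_small[of "min g1 g2"] by auto
  from almost_cmp[OF assms(1) assms(2) assms(3), of m] show False
  proof
    assume "fst p \<le> fst q + 4 * rad m \<and> snd p \<le> snd q + 4 * rad m"
    then have "g1 \<le> 4 * rad m" unfolding g1_def by simp
    then show False using m by simp
  next
    assume "fst q \<le> fst p + 4 * rad m \<and> snd q \<le> snd p + 4 * rad m"
    then have "g2 \<le> 4 * rad m" unfolding g2_def by simp
    then show False using m by simp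
  qed
qed



lemma nbh_sets: "sets \<mu> = sets borel \<Longrightarrow> nbh a S \<in> sets \<mu>"
  using closed_nbh[of a S] by simp

lemma koenig_step:
  fixes \<mu> :: "(real \<times> real) measure"
  assumes fin: "finite_measure \<mu>" and sets: "sets \<mu> = sets borel"
    and C: "C \<in> sets \<mu>"
    and good: "\<forall>j\<ge>m. \<exists>W\<in>fam j. e \<le> measure \<mu> (nbh (rad j) W \<inter> C)"
  shows "\<exists>U\<in>fam m. \<forall>j\<ge>Suc m. \<exists>W\<in>fam j. e \<le> measure \<mu> (nbh (rad j) W \<inter> (C \<inter> nbh (rad m) U))"
proof -
  have "\<forall>j. \<exists>W. j \<ge> m \<longrightarrow> W \<in> fam j \<and> e \<le> measure \<mu> (nbh (rad j) W \<inter> C)"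
  proof
    fix j show "\<exists>W. j \<ge> m \<longrightarrow> W \<in> fam j \<and> e \<le> measure \<mu> (nbh (rad j) W \<inter> C)"
    proof (cases "j \<ge> m")
      case True then show ?thesis using good by meson
    qed simp
  qed
  then have "\<exists>Wf. \<forall>j. j \<ge> m \<longrightarrow> Wf j \<in> fam j \<and> e \<le> measure \<mu> (nbh (rad j) (Wf j) \<inter> C)"
    by (rule choice)
  then obtain Wf where Wf0: "\<forall>j. j \<ge> m \<longrightarrow> Wf j \<in> fam j \<and> e \<le> measure \<mu> (nbh (rad j) (Wf j) \<inter> C)"
    by blast
  then have Wf: "\<And>j. j \<ge> m \<Longrightarrow> Wf j \<in> fam j \<and> e \<le> measure \<mu> (nbh (rad j) (Wf j) \<inter> C)" by blast
  have "\<forall>j. \<exists>A. j \<ge> m \<longrightarrow> A \<in> fam m \<and> nbh (rad j) (Wf j) \<subseteq> nbh (rad m) A"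
  proof
    fix j show "\<exists>A. j \<ge> m \<longrightarrow> A \<in> fam m \<and> nbh (rad j) (Wf j) \<subseteq> nbh (rad m) A"
    proof (cases "j \<ge> m")
      case True
      then obtain A where "A \<in> fam m" "nbh (rad j) (Wf j) \<subseteq> nbh (rad m) A"
        using ancestor_iter[OF True] Wf[OF True] by meson
      then show ?thesis by blast
    qed simp
  qed
  then have "\<exists>Af. \<forall>j. j \<ge> m \<longrightarrow> Af j \<in> fam m \<and> nbh (rad j) (Wf j) \<subseteq> nbh (rad m) (Af j)"
    by (rule choice)
  then obtain Af where Af0: "\<forall>j. j \<ge> m \<longrightarrow> Af j \<in> fam m \<and> nbh (rad j) (Wf j) \<subseteq> nbh (rad m) (Af j)"
    by blast
  then have Af: "\<And>j. j \<ge> m \<Longrightarrow> Af j \<in> fam m \<and> nbh (rad j) (Wf j) \<subseteq> nbh (rad m) (Af j)" by blast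
  have "Af ` {m..} \<subseteq> fam m" using Af by auto
  then have "finite (Af ` {m..})" using finite_fam[of m] by (rule finite_subset)
  moreover have "infinite {m..}" by (rule infinite_Ici)
  ultimately obtain U where U: "U \<in> Af ` {m..}" "infinite (Af -` {U} \<inter> {m..})"
    by (rule inf_img_fin_domE')
  have Ufam: "U \<in> fam m" using U(1) Af by auto
  have "\<forall>j'\<ge>Suc m. \<exists>W\<in>fam j'. e \<le> measure \<mu> (nbh (rad j') W \<inter> (C \<inter> nbh (rad m) U))"
  proof (intro allI impI)
    fix j' assume j': "j' \<ge> Suc m"
    obtain j where j: "j \<ge> j'" "j \<in> Af -` {U} \<inter> {m..}" using U(2) unfolding infinite_nat_iff_unbounded_le by blast
    then have jm: "j \<ge> m" and AU: "Af j = U" by auto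
    obtain W' where W': "W' \<in> fam j'" "nbh (rad j) (Wf j) \<subseteq> nbh (rad j') W'"
      using ancestor_iter[OF j(1)] Wf[OF jm] by blast
    have "nbh (rad j) (Wf j) \<subseteq> nbh (rad m) U" using Af[OF jm] AU by simp
    then have sub: "nbh (rad j) (Wf j) \<inter> C \<subseteq> nbh (rad j') W' \<inter> (C \<inter> nbh (rad m) U)"
      using W'(2) by blast
    have "e \<le> measure \<mu> (nbh (rad j) (Wf j) \<inter> C)" using Wf[OF jm] by blast
    also have "\<dots> \<le> measure \<mu> (nbh (rad j') W' \<inter> (C \<inter> nbh (rad m) U))"
      using finite_measure.finite_measure_mono[OF fin sub] C nbh_sets[OF sets, of "rad j'" W'] nbh_sets[OF sets, of "rad m" U]
      by (meson sets.Int)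
    finally show "\<exists>W\<in>fam j'. e \<le> measure \<mu> (nbh (rad j') W \<inter> (C \<inter> nbh (rad m) U))" using W'(1) by blast
  qed
  then show ?thesis using Ufam by blast
qed

lemma koenig:
  fixes \<mu> :: "(real \<times> real) measure"
  assumes fin: "finite_measure \<mu>" and sets: "sets \<mu> = sets borel"
    and H: "\<And>j. \<exists>S\<in>fam j. e \<le> measure \<mu> (nbh (rad j) S)"
  shows "\<exists>Ss C. (\<forall>m. Ss m \<in> fam m) \<and> C \<in> sets \<mu> \<and> e \<le> measure \<mu> C \<and> (\<forall>x\<in>C. \<forall>m. x \<in> nbh (rad m) (Ss m))"
proof -
  define good where "good C m \<longleftrightarrow> C \<in> sets \<mu> \<and> (\<forall>j\<ge>m. \<exists>W\<in>fam j. e \<le> measure \<mu> (nbh (rad j) W \<inter> C))" for C m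
  have step: "\<exists>U. U \<in> fam m \<and> good (C \<inter> nbh (rad m) U) (Suc m)" if gCm: "good C m" for C m
  proof -
    have C: "C \<in> sets \<mu>" using gCm unfolding good_def by blast
    have gg: "\<forall>j\<ge>m. \<exists>W\<in>fam j. e \<le> measure \<mu> (nbh (rad j) W \<inter> C)" using gCm unfolding good_def by blast
    obtain U where "U \<in> fam m" "\<forall>j\<ge>Suc m. \<exists>W\<in>fam j. e \<le> measure \<mu> (nbh (rad j) W \<inter> (C \<inter> nbh (rad m) U))"
      using koenig_step[OF fin sets C gg] by blast
    moreover have "C \<inter> nbh (rad m) U \<in> sets \<mu>" using C nbh_sets[OF sets] by blast
    ultimately show ?thesis unfolding good_def by blast
  qed
  define nx where "nx C m = (SOME U. U \<in> fam m \<and> good (C \<inter> nbh (rad m) U) (Suc m))" for C m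
  have nx: "nx C m \<in> fam m \<and> good (C \<inter> nbh (rad m) (nx C m)) (Suc m)" if "good C m" for C m
    unfolding nx_def using someI_ex[OF step[OF that]] .
  define Cs where "Cs = rec_nat UNIV (\<lambda>m C. C \<inter> nbh (rad m) (nx C m))"
  have Cs0: "Cs 0 = UNIV" and CsS: "Cs (Suc m) = Cs m \<inter> nbh (rad m) (nx (Cs m) m)" for m
    unfolding Cs_def by simp_all
  have spaceU: "space \<mu> = UNIV" using sets_eq_imp_space_eq[OF sets] by simp
  have goodCs: "good (Cs m) m" for m
  proof (induction m)
    case 0
    have "UNIV \<in> sets \<mu>" using sets.top[of \<mu>] spaceU by simp
    moreover have "\<exists>W\<in>fam j. e \<le> measure \<mu> (nbh (rad j) W \<inter> UNIV)" for j using H[of j] by simp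
    ultimately show ?case unfolding good_def Cs0 by blast
  next
    case (Suc m)
    then show ?case using nx[OF Suc] CsS[of m] by simp
  qed
  define Ss where "Ss m = nx (Cs m) m" for m
  have Ss: "Ss m \<in> fam m" for m using nx[OF goodCs[of m]] unfolding Ss_def by blast
  have Csm: "range Cs \<subseteq> sets \<mu>" using goodCs unfolding good_def by blast
  have dec: "decseq Cs" unfolding decseq_Suc_iff using CsS by blast
  have Cse: "e \<le> measure \<mu> (Cs m)" for m
  proof -
    obtain W where "W \<in> fam m" "e \<le> measure \<mu> (nbh (rad m) W \<inter> Cs m)" using goodCs[of m] unfolding good_def by blast
    moreover have "measure \<mu> (nbh (rad m) W \<inter> Cs m) \<le> measure \<mu> (Cs m)"
      using finite_measure.finite_measure_mono[OF fin, of "nbh (rad m) W \<inter> Cs m" "Cs m"] Csm by blast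
    ultimately show ?thesis by linarith
  qed
  have lim: "(\<lambda>m. measure \<mu> (Cs m)) \<longlonglongrightarrow> measure \<mu> (\<Inter>m. Cs m)"
    using finite_measure.finite_Lim_measure_decseq[OF fin Csm dec] .
  have "e \<le> measure \<mu> (\<Inter>m. Cs m)" using lim Cse by (intro LIMSEQ_le_const) auto
  moreover have "(\<Inter>m. Cs m) \<in> sets \<mu>" using Csm by blast
  moreover have "\<forall>x\<in>(\<Inter>m. Cs m). \<forall>m. x \<in> nbh (rad m) (Ss m)"
  proof (intro ballI allI)
    fix x m assume "x \<in> (\<Inter>m. Cs m)"
    then have "x \<in> Cs (Suc m)" by blast
    then show "x \<in> nbh (rad m) (Ss m)" unfolding CsS Ss_def by blast
  qed
  ultimately show ?thesis using Ss by blast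
qed



lemma unit_lebesgue_compl: "measure unit_lebesgue (- {0..1}) = 0"
proof -
  have "emeasure unit_lebesgue (- {0..1}) = (\<integral>\<^sup>+ x. indicator {0..1} x * indicator (- {0..1}) (x::real) \<partial>lborel)"
    unfolding unit_lebesgue_def by (rule emeasure_density) auto
  also have "\<dots> = (\<integral>\<^sup>+ x. 0 \<partial>(lborel :: real measure))"
    by (rule nn_integral_cong) (simp add: indicator_def)
  finally show ?thesis by (simp add: measure_def)
qed

lemma permuton_box_compl:
  assumes "permuton \<mu>"
  shows "measure \<mu> (- ({0..1} \<times> {0..1})) = 0"
proof -
  have sets: "sets \<mu> = sets borel" and ps: "prob_space \<mu>"
    and d1: "distr \<mu> lborel fst = unit_lebesgue" and d2: "distr \<mu> lborel snd = unit_lebesgue"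
    using assms unfolding permuton_def by auto
  have fin: "finite_measure \<mu>" using ps unfolding prob_space_def by blast
  have sp: "space \<mu> = UNIV" using sets_eq_imp_space_eq[OF sets] by simp
  have bf: "(fst :: real \<times> real \<Rightarrow> real) \<in> borel_measurable borel" "(snd :: real \<times> real \<Rightarrow> real) \<in> borel_measurable borel"
    by (intro borel_measurable_continuous_onI continuous_intros)+
  have mf: "fst \<in> measurable \<mu> lborel" "snd \<in> measurable \<mu> lborel"
    using bf measurable_cong_sets[OF sets refl] by auto
  have m1: "measure \<mu> (fst -` (- {0..1})) = 0"
    using measure_distr[OF mf(1), of "- {0..1}"] d1 unit_lebesgue_compl sp by simp
  have m2: "measure \<mu> (snd -` (- {0..1})) = 0"
    using measure_distr[OF mf(2), of "- {0..1}"] d2 unit_lebesgue_compl sp by simp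
  have eq: "- ({0..1} \<times> {0..1}) = fst -` (- {0..1}) \<union> snd -` (- {0..1::real})" by auto
  have s1: "fst -` (- {0..1::real}) \<in> sets \<mu>" "snd -` (- {0..1::real}) \<in> sets \<mu>"
    using mf sp by (auto simp: measurable_def)
  have "measure \<mu> (- ({0..1} \<times> {0..1})) \<le> 0"
    unfolding eq using measure_Un_le[OF s1] m1 m2 by simp
  then show ?thesis using measure_nonneg[of \<mu>] by (meson order.antisym)
qed

theorem proposition3p2:
  fixes \<mu> :: "(real \<times> real) measure"
    and N :: "nat \<Rightarrow> nat"
    and \<sigma> :: "nat \<Rightarrow> nat \<Rightarrow> nat"
  assumes "permuton \<mu>"
    and "\<And>k. \<sigma> k permutes {1..N k}"
    and "filterlim N at_top sequentially"
    and "weak_conv_plane (\<lambda>k. permuton_of (N k) (\<sigma> k)) \<mu>"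
    and "\<And>A. monotone_set A \<Longrightarrow> A \<in> sets \<mu> \<Longrightarrow> measure \<mu> A = 0"
  shows "(\<lambda>k. real (LIS (N k) (\<sigma> k)) / real (N k)) \<longlonglongrightarrow> 0"
proof (rule ccontr)
  define x where "x k = real (LIS (N k) (\<sigma> k)) / real (N k)" for k
  assume nt: "\<not> (\<lambda>k. real (LIS (N k) (\<sigma> k)) / real (N k)) \<longlonglongrightarrow> 0"
  have xnn: "0 \<le> x k" for k unfolding x_def by simp
  have "\<exists>e>0. infinite {k. e \<le> x k}"
  proof (rule ccontr)
    assume "\<not> (\<exists>e>0. infinite {k. e \<le> x k})"
    then have fin: "\<And>e. e > 0 \<Longrightarrow> finite {k. e \<le> x k}" by blast
    have "x \<longlonglongrightarrow> 0"
    proof (rule LIMSEQ_I)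
      fix r :: real assume r: "0 < r"
      obtain B where B: "\<forall>k\<in>{k. r \<le> x k}. k \<le> B" using fin[OF r] unfolding finite_nat_set_iff_bounded_le by blast
      have "norm (x k - 0) < r" if "k \<ge> Suc B" for k
      proof -
        have "\<not> r \<le> x k" using B that by force
        then show ?thesis using xnn[of k] by simp
      qed
      then show "\<exists>no. \<forall>k\<ge>no. norm (x k - 0) < r" by blast
    qed
    then show False using nt unfolding x_def by simp
  qed
  then obtain e where e: "e > 0" "infinite {k. e \<le> x k}" by blast
  have sets: "sets \<mu> = sets borel" and ps: "prob_space \<mu>"
    using assms(1) unfolding permuton_def by auto
  have fin: "finite_measure \<mu>" using ps unfolding prob_space_def by blast
  have sp: "space \<mu> = UNIV" using sets_eq_imp_space_eq[OF sets] by simp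
  have H: "\<exists>S\<in>fam m. e \<le> measure \<mu> (nbh (rad m) S)" for m
  proof -
    let ?M = "(2::real)^m"
    obtain N0 where N0: "\<And>k. k \<ge> N0 \<Longrightarrow> 2^m \<le> N k"
      using assms(3) unfolding filterlim_at_top eventually_sequentially by blast
    define K where "K = {k. e \<le> x k \<and> N0 \<le> k}"
    have Kinf: "infinite K"
      unfolding K_def infinite_nat_iff_unbounded_le
    proof
      fix m0
      obtain k where "k \<ge> max m0 N0" "e \<le> x k" using e(2) unfolding infinite_nat_iff_unbounded_le by blast
      then show "\<exists>k\<ge>m0. k \<in> {k. e \<le> x k \<and> N0 \<le> k}" by auto
    qed
    define Ik where "Ik k = (SOME I. I \<subseteq> {1..N k} \<and> strict_mono_on I (\<sigma> k) \<and> card I = LIS (N k) (\<sigma> k))" for k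
    have Ik: "Ik k \<subseteq> {1..N k} \<and> strict_mono_on (Ik k) (\<sigma> k) \<and> card (Ik k) = LIS (N k) (\<sigma> k)" for k
      unfolding Ik_def by (rule someI_ex[OF LIS_attained])
    define Sk where "Sk k = rnd ?M ` ((\<lambda>j. (real j / real (N k), real (\<sigma> k j) / real (N k))) ` Ik k)" for k
    have Kprop: "Sk k \<in> fam m \<and> e \<le> integral\<^sup>L (permuton_of (N k) (\<sigma> k)) (gfun (rad m) (Sk k))" if "k \<in> K" for k
    proof -
      have ek: "e \<le> x k" and Nk: "2^m \<le> N k" using that N0 unfolding K_def by auto
      have Npos: "real (N k) > 0" using Nk by (metis of_nat_0_less_iff less_le_trans zero_less_power pos2)
      have MN: "?M \<le> real (N k)" using Nk by (metis of_nat_le_iff of_nat_numeral of_nat_power)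
      have "0 < x k" using ek e(1) by linarith
      have "LIS (N k) (\<sigma> k) \<noteq> 0"
      proof
        assume "LIS (N k) (\<sigma> k) = 0"
        then have "x k = 0" unfolding x_def by simp
        then show False using \<open>0 < x k\<close> by simp
      qed
      then have ne: "Ik k \<noteq> {}" using Ik[of k] by auto
      have "Sk k \<in> fam m" unfolding Sk_def using S_fam[OF assms(2)[of k] _ ne] Ik[of k] by blast
      moreover have "real (card (Ik k)) / real (N k) \<le> integral\<^sup>L (permuton_of (N k) (\<sigma> k)) (gfun (4 / ?M) (Sk k))"
        unfolding Sk_def using step1[OF assms(2)[of k], of "Ik k" ?M] Ik[of k] MN by simp
      moreover have "real (card (Ik k)) / real (N k) = x k" unfolding x_def using Ik[of k] by simp
      moreover have "4 / ?M = rad m" unfolding rad_def by simp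
      ultimately show ?thesis using ek by simp
    qed
    have "Sk ` K \<subseteq> fam m" using Kprop by auto
    then have "finite (Sk ` K)" using finite_fam[of m] by (rule finite_subset)
    then obtain S where S: "S \<in> Sk ` K" "infinite (Sk -` {S} \<inter> K)" using Kinf by (rule inf_img_fin_domE')
    have Sfam: "S \<in> fam m" using S(1) Kprop by auto
    have "Sk -` {S} \<inter> K \<subseteq> {k. e \<le> integral\<^sup>L (permuton_of (N k) (\<sigma> k)) (gfun (rad m) S)}"
      using Kprop by auto
    then have inf2: "infinite {k. e \<le> integral\<^sup>L (permuton_of (N k) (\<sigma> k)) (gfun (rad m) S)}"
      using S(2) infinite_super by blast
    have radpos: "rad m > 0" unfolding rad_def by simp
    have conv: "(\<lambda>k. integral\<^sup>L (permuton_of (N k) (\<sigma> k)) (gfun (rad m) S)) \<longlonglongrightarrow> integral\<^sup>L \<mu> (gfun (rad m) S)"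
      using assms(4) gfun_cont[OF radpos] gfun_bounded unfolding weak_conv_plane_def by blast
    have e1: "e \<le> integral\<^sup>L \<mu> (gfun (rad m) S)" using lim_ge_of_infinite[OF conv inf2] .
    have gmeas: "gfun (rad m) S \<in> borel_measurable \<mu>"
      using borel_measurable_continuous_onI[OF gfun_cont[OF radpos]] measurable_cong_sets[OF sets refl] by blast
    have nbm: "nbh (rad m) S \<in> sets \<mu>" using nbh_sets[OF sets] .
    have "integral\<^sup>L \<mu> (gfun (rad m) S) \<le> integral\<^sup>L \<mu> (indicator (nbh (rad m) S))"
    proof (rule integral_mono)
      show "integrable \<mu> (gfun (rad m) S)"
        using finite_measure.integrable_const_bound[OF fin, of "gfun (rad m) S" 1] gmeas gfun_range by simp
      show "integrable \<mu> (indicator (nbh (rad m) S) :: _ \<Rightarrow> real)"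
        using finite_measure.emeasure_finite[OF fin] nbm by (simp add: integrable_indicator_iff sp less_top)
      fix y show "gfun (rad m) S y \<le> indicator (nbh (rad m) S) y" using gfun_le[OF radpos] .
    qed
    also have "\<dots> = measure \<mu> (nbh (rad m) S)" using sp by simp
    finally show ?thesis using e1 Sfam by force
  qed
  obtain Ss C where Ss: "\<And>m. Ss m \<in> fam m" and C: "C \<in> sets \<mu>" "e \<le> measure \<mu> C"
    and Cn: "\<And>y m. y \<in> C \<Longrightarrow> y \<in> nbh (rad m) (Ss m)"
    using koenig[OF fin sets H] by blast
  define A where "A = C \<inter> ({0..1} \<times> {0..1})"
  have boxm: "{0..1::real} \<times> {0..1::real} \<in> sets \<mu>"
    using sets borel_closed[OF closed_Times[OF closed_atLeastAtMost closed_atLeastAtMost, of 0 1 0 1]] by simp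
  have Am: "A \<in> sets \<mu>" unfolding A_def using C(1) boxm by blast
  have "monotone_set A"
    unfolding monotone_set_def
  proof (intro conjI ballI)
    show "A \<subseteq> {0..1} \<times> {0..1}" unfolding A_def by blast
    fix p assume pA: "p \<in> A"
    obtain t s where p: "p = (t, s)" by (cases p)
    have "A \<subseteq> {0..t} \<times> {0..s} \<union> {t..1} \<times> {s..1}"
    proof
      fix q assume qA: "q \<in> A"
      have "cmp p q" using limit_cmp[OF Ss, of p q] pA qA Cn unfolding A_def by blast
      moreover have "q \<in> {0..1} \<times> {0..1}" using qA unfolding A_def by blast
      ultimately show "q \<in> {0..t} \<times> {0..s} \<union> {t..1} \<times> {s..1}"
        unfolding cmp_def p by (cases q) auto
    qed
    then show "case p of (t, s) \<Rightarrow> A \<subseteq> {0..t} \<times> {0..s} \<union> {t..1} \<times> {s..1}" using p by simp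
  qed
  then have A0: "measure \<mu> A = 0" using assms(5) Am by blast
  have cm: "- ({0..1::real} \<times> {0..1::real}) \<in> sets \<mu>"
    using sets.compl_sets[OF boxm] sp by (simp add: Compl_eq_Diff_UNIV)
  have "C \<subseteq> A \<union> - ({0..1} \<times> {0..1})" unfolding A_def by blast
  then have "measure \<mu> C \<le> measure \<mu> (A \<union> - ({0..1} \<times> {0..1}))"
    using finite_measure.finite_measure_mono[OF fin] Am cm by blast
  also have "\<dots> \<le> measure \<mu> A + measure \<mu> (- ({0..1} \<times> {0..1}))" using measure_Un_le[OF Am cm] .
  also have "\<dots> = 0" using A0 permuton_box_compl[OF assms(1)] by simp
  finally show False using C(2) e(1) by linarith
qed

end
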